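(* Let $A \in M_n(\mathbb{C})$. Then strong continuity of $f_A^{-1}$ fails at every point $z\in\partial F(A)$ that is an isolated, fully round, multiply generated boundary point.
   Context: For $A\in M_n(\mathbb{C})$, $f_A(x)=x^*Ax$ is defined on the unit sphere $\mathbb{C}S^n$ of $\mathbb{C}^n$ and $F(A)=f_A(\mathbb{C}S^n)$ is the numerical range. The multivalued inverse $f_A^{-1}$ is strongly continuous at $z\in F(A)$ if for every $x\in f_A^{-1}(z)$ and every neighborhood $V$ of $x$ in $\mathbb{C}S^n$, $f_A(V)$ contains a neighborhood of $z$ relative to $F(A)$. A point $z\in\partial F(A)$ is fully round if neither of its one-sided neighborhoods in $\partial F(A)$ is a line segment, for every sufficiently small size. A boundary point $z$ is multiply generated if $f_A^{-1}(z)$ is not contained in a one-dimensional subspace of $\mathbb{C}^n$; it is an isolated multiply generated boundary point if some neighborhood of $z$ contains no other multiply generated boundary points. *)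

theory Defs
  imports "HOL-Analysis.Analysis"
begin

definition qform :: "complex^'n^'n \<Rightarrow> complex^'n \<Rightarrow> complex" where
  "qform A x = (\<Sum>i\<in>UNIV. cnj (x $ i) * (A *v x) $ i)"

definition csphere :: "(complex^'n) set" where
  "csphere = sphere 0 1"

definition numrange :: "complex^'n^'n \<Rightarrow> complex set" where
  "numrange A = qform A ` csphere"

definition fibre :: "complex^'n^'n \<Rightarrow> complex \<Rightarrow> (complex^'n) set" where
  "fibre A z = {x \<in> csphere. qform A x = z}"

definition strongly_continuous_inv :: "complex^'n^'n \<Rightarrow> complex \<Rightarrow> bool" where
  "strongly_continuous_inv A z \<longleftrightarrow>
     (\<forall>x \<in> fibre A z. \<forall>V. open V \<and> x \<in> V \<longrightarrow>
        (\<exists>U. open U \<and> z \<in> U \<and> U \<inter> numrange A \<subseteq> qform A ` (V \<inter> csphere)))"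

text \<open>Multiply generated boundary point: the fibre is not contained in a complex
  one-dimensional subspace {c v | c \<in> \<complex>} (for v=0 this is {0}).\<close>
definition multiply_generated :: "complex^'n^'n \<Rightarrow> complex \<Rightarrow> bool" where
  "multiply_generated A z \<longleftrightarrow> z \<in> frontier (numrange A) \<and>
     \<not> (\<exists>v. fibre A z \<subseteq> range (\<lambda>c::complex. c *s v))"

definition isolated_multiply_generated :: "complex^'n^'n \<Rightarrow> complex \<Rightarrow> bool" where
  "isolated_multiply_generated A z \<longleftrightarrow> multiply_generated A z \<and>
     (\<exists>e>0. \<forall>w \<in> ball z e. w \<noteq> z \<longrightarrow> \<not> multiply_generated A w)"

text \<open>Fully round boundary point: for all sufficiently small sizes, neither one-sided
  neighbourhood of z in the boundary curve is a line segment.  A one-sided neighbourhood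
  of z that is a segment is a segment [z,w] (w \<noteq> z) contained in the boundary; if F(A)
  is a single point, its one-sided neighbourhoods are the degenerate segment {z}.\<close>
definition fully_round :: "complex^'n^'n \<Rightarrow> complex \<Rightarrow> bool" where
  "fully_round A z \<longleftrightarrow> z \<in> frontier (numrange A) \<and> numrange A \<noteq> {z} \<and>
     (\<exists>e>0. \<forall>w \<in> frontier (numrange A). w \<noteq> z \<and> dist z w < e \<longrightarrow>
         \<not> closed_segment z w \<subseteq> frontier (numrange A))"

end

theory Submission imports Defs begin
lemma qform_cont: "continuous_on UNIV (qform A)"
  unfolding qform_def[abs_def] matrix_vector_mult_def vec_lambda_beta
  by (intro continuous_on_sum continuous_on_mult continuous_on_cnj continuous_on_const linear_continuous_on bounded_linear_vec_nth)
lemma norm_smult_vec: "norm (c *s (y::complex^'n)) = cmod c * norm y"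
  unfolding norm_vec_def
  by (simp add: L2_set_right_distrib norm_mult)
lemma numrange_compact: "compact (numrange A)"
  unfolding numrange_def csphere_def
  by (rule compact_continuous_image[OF continuous_on_subset[OF qform_cont] compact_sphere]) auto

lemma numrange_connected: "connected (numrange (A::complex^'n^'n))"
proof -
  have "2 \<le> DIM(complex^'n)" by simp
  then have "connected (sphere (0::complex^'n) 1)" by (rule connected_sphere)
  then show ?thesis unfolding numrange_def csphere_def
    by (intro connected_continuous_image continuous_on_subset[OF qform_cont]) auto
qed
lemma frontier_near:
  fixes S :: "complex set"
  assumes "connected S" "closed S" "z \<in> frontier S" "S \<noteq> {z}" "d > 0"
  shows "\<exists>w \<in> frontier S. w \<noteq> z \<and> w \<in> ball z d"
proof -
  have zS: "z \<in> S" using assms frontier_subset_closed by blast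
  have lim: "z islimpt S"
    by (rule connected_imp_perfect[OF assms(1) zS]) (use zS assms(4) in auto)
  obtain s where s: "s \<in> S" "s \<noteq> z" "dist s z < d" using lim assms(5) islimpt_approachable by blast
  have "z \<in> closure (- S)" using assms(3) by (simp add: frontier_def closure_complement)
  then obtain p where p: "p \<in> - S" "dist p z < d" using assms(5) closure_approachable by metis
  have c: "connected (ball z d - {z})" by (rule connected_punctured_ball) simp
  have "(ball z d - {z}) \<inter> frontier S \<noteq> {}"
  proof (rule connected_Int_frontier[OF c])
    have "s \<in> (ball z d - {z}) \<inter> S" using s by (simp add: dist_commute)
    then show "(ball z d - {z}) \<inter> S \<noteq> {}" by blast
    have "p \<in> (ball z d - {z}) - S" using p zS by (auto simp: dist_commute)
    then show "(ball z d - {z}) - S \<noteq> {}" by blast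
  qed
  then show ?thesis by auto
qed
theorem theorem2:
  fixes A :: "complex^'n^'n" and z :: complex
  assumes "z \<in> frontier (numrange A)"
    and "isolated_multiply_generated A z"
    and "fully_round A z"
  shows "\<not> strongly_continuous_inv A z"
proof
  assume SC: "strongly_continuous_inv A z"
  from assms(2) obtain e0 where mg: "multiply_generated A z" and e0: "e0 > 0"
    and iso: "\<And>w. w \<in> ball z e0 \<Longrightarrow> w \<noteq> z \<Longrightarrow> \<not> multiply_generated A w"
    unfolding isolated_multiply_generated_def by blast
  have nl: "\<not> (\<exists>v. fibre A z \<subseteq> range (\<lambda>c::complex. c *s v))"
    using mg unfolding multiply_generated_def by blast
  obtain x1 where x1: "x1 \<in> fibre A z" using nl by blast
  obtain x2 where x2: "x2 \<in> fibre A z" and x2n: "x2 \<notin> range (\<lambda>c::complex. c *s x1)"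
    using nl by blast
  define K where "K = (\<lambda>c::complex. c *s x1) ` sphere 0 1"
  have "continuous_on UNIV (\<lambda>c::complex. c *s x1)"
    unfolding vector_scalar_mult_def by (intro continuous_on_vec_lambda continuous_intros)
  then have "compact K" unfolding K_def
    by (rule compact_continuous_image[OF continuous_on_subset compact_sphere]) auto
  moreover have "K \<noteq> {}" unfolding K_def
    by (metis empty_iff image_is_empty norm_one one_complex.simps(1) mem_sphere_0 zero_neq_one)
  moreover have "x2 \<notin> K" using x2n unfolding K_def by auto
  ultimately have dpos: "infdist x2 K > 0"
    by (intro infdist_pos_not_in_closed compact_imp_closed)
  define d where "d = infdist x2 K"
  define r where "r = d / 2"
  have r: "r > 0" using dpos by (simp add: r_def d_def)
  obtain U1 where U1: "open U1" "z \<in> U1" "U1 \<inter> numrange A \<subseteq> qform A ` (ball x1 r \<inter> csphere)"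
    using SC x1 r unfolding strongly_continuous_inv_def by (meson centre_in_ball open_ball)
  obtain U2 where U2: "open U2" "z \<in> U2" "U2 \<inter> numrange A \<subseteq> qform A ` (ball x2 r \<inter> csphere)"
    using SC x2 r unfolding strongly_continuous_inv_def by (meson centre_in_ball open_ball)
  have "open (U1 \<inter> U2 \<inter> ball z e0)" "z \<in> U1 \<inter> U2 \<inter> ball z e0" using U1 U2 e0 by auto
  then obtain \<delta> where \<delta>: "\<delta> > 0" "ball z \<delta> \<subseteq> U1 \<inter> U2 \<inter> ball z e0"
    by (meson openE)
  have ne: "numrange A \<noteq> {z}" using assms(3) unfolding fully_round_def by blast
  have cl: "closed (numrange A)" by (simp add: numrange_compact compact_imp_closed)
  obtain w where w: "w \<in> frontier (numrange A)" "w \<noteq> z" "w \<in> ball z \<delta>"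
    using frontier_near[OF numrange_connected cl assms(1) ne \<delta>(1)] by blast
  have wN: "w \<in> numrange A" using w(1) cl frontier_subset_closed by blast
  obtain y1 where y1: "y1 \<in> ball x1 r" "y1 \<in> csphere" "qform A y1 = w"
    using U1(3) wN w(3) \<delta>(2) by force
  obtain y2 where y2: "y2 \<in> ball x2 r" "y2 \<in> csphere" "qform A y2 = w"
    using U2(3) wN w(3) \<delta>(2) by force
  have "\<not> multiply_generated A w" using iso w \<delta>(2) by blast
  then obtain v where v: "fibre A w \<subseteq> range (\<lambda>c::complex. c *s v)"
    using w(1) unfolding multiply_generated_def by blast
  have "y1 \<in> fibre A w" "y2 \<in> fibre A w" using y1 y2 by (auto simp: fibre_def)
  then obtain a b where ab: "y1 = a *s v" "y2 = b *s v" using v by blast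
  have ny1: "norm y1 = 1" "norm y2 = 1" using y1(2) y2(2) by (auto simp: csphere_def)
  then have a0: "a \<noteq> 0" using ab by auto
  define c where "c = b / a"
  have yc: "y2 = c *s y1" using ab a0 by (simp add: c_def)
  have "cmod c = 1" using ny1 yc by (simp add: norm_smult_vec)
  then have cK: "c *s x1 \<in> K" unfolding K_def by auto
  have "d \<le> dist x2 (c *s x1)" unfolding d_def by (rule infdist_le[OF cK])
  also have "\<dots> \<le> dist x2 y2 + dist y2 (c *s x1)" by (rule dist_triangle)
  also have "dist y2 (c *s x1) = dist y1 x1"
    using \<open>cmod c = 1\<close> yc by (simp add: dist_norm norm_smult_vec flip: vector_ssub_ldistrib)
  finally have "d \<le> dist x2 y2 + dist y1 x1" .
  moreover have "dist x2 y2 < r" "dist y1 x1 < r" using y1 y2 by (auto simp: dist_commute)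
  ultimately show False using r_def r by linarith
qed

end
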